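(* There is a function $C(t,\epsilon)$ such that the following holds for every positive integer $t$ and every $\epsilon\in(0,1)$: let $G$ be a connected balanced bipartite graph with parts $X,Y$ each of order $n$, with $\delta(G)\geq 3C(t,\epsilon)$ and with no induced $S_{t,t}$. Then for any two vertices $a,b$ in the same part of $G$ there is a vertex $c$ in that same part such that $|N(a)\setminus N(c)|\leq \epsilon|N(a)|$ and $|N(b)\setminus N(c)|\leq \epsilon|N(b)|$.
   Context: For positive integers $a,b$, the biclaw $S_{a,b}$ is the graph with vertex set $\{x,x_1,\dots,x_a,y,y_1,\dots,y_b\}$ and edges $xy$, $xy_1,\dots,xy_b$, $yx_1,\dots,yx_a$; "no induced $S_{t,t}$" means no induced subgraph isomorphic to $S_{t,t}$. $N(v)$ is the neighbourhood of $v$ and $\delta(G)$ the minimum degree. *)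

theory Defs
  imports Complex_Main
begin

definition simple_graph :: "'a set \<Rightarrow> ('a \<Rightarrow> 'a \<Rightarrow> bool) \<Rightarrow> bool" where
  "simple_graph V E \<longleftrightarrow> finite V \<and> (\<forall>u v. E u v \<longrightarrow> u \<in> V \<and> v \<in> V)
     \<and> (\<forall>u v. E u v \<longrightarrow> E v u) \<and> (\<forall>u. \<not> E u u)"

definition nbhd :: "'a set \<Rightarrow> ('a \<Rightarrow> 'a \<Rightarrow> bool) \<Rightarrow> 'a \<Rightarrow> 'a set" where
  "nbhd V E v = {u \<in> V. E v u}"

definition connected_graph :: "'a set \<Rightarrow> ('a \<Rightarrow> 'a \<Rightarrow> bool) \<Rightarrow> bool" where
  "connected_graph V E \<longleftrightarrow> (\<forall>u\<in>V. \<forall>v\<in>V. E\<^sup>*\<^sup>* u v)"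

definition balanced_bipartite ::
  "'a set \<Rightarrow> ('a \<Rightarrow> 'a \<Rightarrow> bool) \<Rightarrow> 'a set \<Rightarrow> 'a set \<Rightarrow> nat \<Rightarrow> bool" where
  "balanced_bipartite V E X Y n \<longleftrightarrow> X \<inter> Y = {} \<and> X \<union> Y = V
     \<and> card X = n \<and> card Y = n
     \<and> (\<forall>u v. E u v \<longrightarrow> (u \<in> X \<and> v \<in> Y) \<or> (u \<in> Y \<and> v \<in> X))"

text \<open>The biclaw S_{a,b}: vertices x, y, x_1..x_a, y_1..y_b.\<close>
datatype bc_vertex = BX | BY | BXi nat | BYi nat

definition biclaw_verts :: "nat \<Rightarrow> nat \<Rightarrow> bc_vertex set" where
  "biclaw_verts a b = {BX, BY} \<union> BXi ` {1..a} \<union> BYi ` {1..b}"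

definition biclaw_adj0 :: "nat \<Rightarrow> nat \<Rightarrow> bc_vertex \<Rightarrow> bc_vertex \<Rightarrow> bool" where
  "biclaw_adj0 a b u v \<longleftrightarrow> (u = BX \<and> v = BY)
     \<or> (u = BX \<and> (\<exists>j\<in>{1..b}. v = BYi j))
     \<or> (u = BY \<and> (\<exists>i\<in>{1..a}. v = BXi i))"

definition biclaw_adj :: "nat \<Rightarrow> nat \<Rightarrow> bc_vertex \<Rightarrow> bc_vertex \<Rightarrow> bool" where
  "biclaw_adj a b u v \<longleftrightarrow> biclaw_adj0 a b u v \<or> biclaw_adj0 a b v u"

definition has_induced_biclaw ::
  "'a set \<Rightarrow> ('a \<Rightarrow> 'a \<Rightarrow> bool) \<Rightarrow> nat \<Rightarrow> nat \<Rightarrow> bool" where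
  "has_induced_biclaw V E a b \<longleftrightarrow> (\<exists>f. inj_on f (biclaw_verts a b)
     \<and> f ` biclaw_verts a b \<subseteq> V
     \<and> (\<forall>u\<in>biclaw_verts a b. \<forall>v\<in>biclaw_verts a b. E (f u) (f v) \<longleftrightarrow> biclaw_adj a b u v))"

end

theory Submission
  imports Defs
begin

lemma card_filter_swap:
  assumes "finite A" "finite B"
  shows "(\<Sum>w\<in>A. card {x\<in>B. M x w}) = (\<Sum>x\<in>B. card {w\<in>A. M x w})"
proof -
  have c: "\<And>S P. finite S \<Longrightarrow> card {x\<in>S. P x} = (\<Sum>x\<in>S. if P x then 1 else 0)"
    by (simp add: sum.inter_filter[symmetric])
  show ?thesis using assms by (simp add: c sum.swap[of _ A B])
qed

lemma kst:
  fixes M :: "'a \<Rightarrow> 'b \<Rightarrow> bool" and \<eta> :: real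
  assumes fW: "finite W" and fB: "finite B" and eta: "0 < \<eta>" "\<eta> \<le> 1"
    and deg: "\<forall>x\<in>B. \<eta> * card W \<le> card {w\<in>W. M x w}"
  shows "2 * real j \<le> \<eta> * card W \<Longrightarrow> \<exists>T B'. T \<subseteq> W \<and> card T = j \<and> B' \<subseteq> B
     \<and> (\<eta>/2)^j * card B \<le> card B' \<and> (\<forall>x\<in>B'. \<forall>w\<in>T. M x w)"
proof (induction j)
  case 0
  then show ?case by (rule_tac x="{}" in exI, rule_tac x=B in exI) auto
next
  case (Suc j)
  then obtain T B' where T: "T \<subseteq> W" "card T = j" "B' \<subseteq> B"
     "(\<eta>/2)^j * card B \<le> card B'" "\<forall>x\<in>B'. \<forall>w\<in>T. M x w" by fastforce
  have fT: "finite T" using T(1) fW finite_subset by blast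
  have fB': "finite B'" using T(3) fB finite_subset by blast
  have WTne: "W - T \<noteq> {}"
  proof
    assume "W - T = {}"
    then have "W \<subseteq> T" by blast
    then have "card W \<le> j" using T(2) fT card_mono by blast
    then have "\<eta> * card W \<le> 1 * real j" using eta by (intro mult_mono) auto
    then show False using Suc.prems by simp
  qed
  have each: "\<eta> * card W / 2 \<le> card {w\<in>W - T. M x w}" if x: "x \<in> B'" for x
  proof -
    have "{w\<in>W. M x w} \<subseteq> {w\<in>W - T. M x w} \<union> T" by blast
    then have "card {w\<in>W. M x w} \<le> card ({w\<in>W - T. M x w} \<union> T)"
      using fW fT by (intro card_mono) auto
    also have "\<dots> \<le> card {w\<in>W - T. M x w} + card T" by (rule card_Un_le)
    finally have "real (card {w\<in>W. M x w}) \<le> card {w\<in>W - T. M x w} + j" using T(2) by linarith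
    moreover have "\<eta> * card W \<le> card {w\<in>W. M x w}" using deg x T(3) by blast
    ultimately show ?thesis using Suc.prems by simp
  qed
  have "(\<Sum>x\<in>B'. \<eta> * card W / 2) \<le> (\<Sum>x\<in>B'. real (card {w\<in>W - T. M x w}))"
    using each by (intro sum_mono) auto
  also have "\<dots> = real (\<Sum>w\<in>W - T. card {x\<in>B'. M x w})"
    using card_filter_swap[of "W - T" B' M] fW fB' by simp
  finally have sumge: "card B' * (\<eta> * card W / 2) \<le> (\<Sum>w\<in>W - T. real (card {x\<in>B'. M x w}))"
    by simp
  have "\<exists>w\<in>W - T. \<eta>/2 * card B' \<le> card {x\<in>B'. M x w}"
  proof (rule ccontr)
    assume "\<not> ?thesis"
    then have "\<forall>w\<in>W - T. real (card {x\<in>B'. M x w}) < \<eta>/2 * card B'" by (meson not_le)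
    then have "(\<Sum>w\<in>W - T. real (card {x\<in>B'. M x w})) < (\<Sum>w\<in>W - T. \<eta>/2 * card B')"
      using WTne fW by (intro sum_strict_mono) auto
    also have "\<dots> = card (W - T) * (\<eta>/2 * card B')" by simp
    also have "\<dots> \<le> card W * (\<eta>/2 * card B')"
      using fW eta by (intro mult_right_mono) (auto intro: card_mono)
    finally show False using sumge by (simp add: algebra_simps)
  qed
  then obtain w where w: "w \<in> W - T" "\<eta>/2 * card B' \<le> card {x\<in>B'. M x w}" by blast
  show ?case
  proof (rule exI[of _ "insert w T"], rule exI[of _ "{x\<in>B'. M x w}"], intro conjI)
    show "insert w T \<subseteq> W" using w T by blast
    show "card (insert w T) = Suc j" using w T fT by simp
    show "{x\<in>B'. M x w} \<subseteq> B" using T by blast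
    have "(\<eta>/2)^Suc j * card B = \<eta>/2 * ((\<eta>/2)^j * card B)" by simp
    also have "\<dots> \<le> \<eta>/2 * card B'" using T(4) eta by (intro mult_left_mono) auto
    finally show "(\<eta>/2)^Suc j * card B \<le> card {x\<in>B'. M x w}" using w by linarith
    show "\<forall>x\<in>{x\<in>B'. M x w}. \<forall>w'\<in>insert w T. M x w'" using T by auto
  qed
qed


locale bg =
  fixes V :: "'a set" and E X Y and n :: nat and t :: nat
  assumes sg: "simple_graph V E" and bb: "balanced_bipartite V E X Y n"
    and nob: "\<not> has_induced_biclaw V E t t"
begin

abbreviation N where "N v \<equiv> nbhd V E v"

lemma sym: "E u v \<Longrightarrow> E v u" using sg unfolding simple_graph_def by blast
lemma irr: "\<not> E u u" using sg unfolding simple_graph_def by blast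
lemma XY: "X \<inter> Y = {}" "X \<union> Y = V" using bb unfolding balanced_bipartite_def by auto
lemma fin: "finite V" using sg unfolding simple_graph_def by blast
lemma edge: "E u v \<Longrightarrow> (u \<in> X \<and> v \<in> Y) \<or> (u \<in> Y \<and> v \<in> X)"
  using bb unfolding balanced_bipartite_def by blast
lemma noXX: "u \<in> X \<Longrightarrow> v \<in> X \<Longrightarrow> \<not> E u v" using edge XY by blast
lemma noYY: "u \<in> Y \<Longrightarrow> v \<in> Y \<Longrightarrow> \<not> E u v" using edge XY by blast
lemma finN: "finite (N v)" using fin unfolding nbhd_def by simp
lemma N_iff: "u \<in> N v \<longleftrightarrow> E v u"
  using sg unfolding nbhd_def simple_graph_def by blast

lemma biclaw_contra:
  assumes x: "x \<in> X" and xy: "E x y" and T: "T \<subseteq> N x - {y}" "card T = t"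
    and S: "S \<subseteq> N y - {x}" "card S = t" and miss: "\<forall>s\<in>S. \<forall>w\<in>T. \<not> E s w"
  shows False
proof -
  have y: "y \<in> Y" using edge[OF xy] x XY by blast
  have TY: "T \<subseteq> Y" using T edge x XY N_iff by blast
  have SX: "S \<subseteq> X" using S edge y XY N_iff by blast
  have fT: "finite T" using finN T finite_subset by blast
  have fS: "finite S" using finN S finite_subset by blast
  obtain hT where hT: "bij_betw hT {1..t} T" using ex_bij_betw_nat_finite_1[OF fT] T(2) by auto
  obtain hS where hS: "bij_betw hS {1..t} S" using ex_bij_betw_nat_finite_1[OF fS] S(2) by auto
  define f where "f v = (case v of BX \<Rightarrow> x | BY \<Rightarrow> y | BXi i \<Rightarrow> hS i | BYi j \<Rightarrow> hT j)" for v
  have hTi: "i \<in> {1..t} \<Longrightarrow> hT i \<in> T" for i using hT bij_betwE by blast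
  have hSi: "i \<in> {1..t} \<Longrightarrow> hS i \<in> S" for i using hS bij_betwE by blast
  have hTinj: "i \<in> {1..t} \<Longrightarrow> j \<in> {1..t} \<Longrightarrow> hT i = hT j \<Longrightarrow> i = j" for i j
    using hT unfolding bij_betw_def inj_on_def by blast
  have hSinj: "i \<in> {1..t} \<Longrightarrow> j \<in> {1..t} \<Longrightarrow> hS i = hS j \<Longrightarrow> i = j" for i j
    using hS unfolding bij_betw_def inj_on_def by blast
  have Tx: "w \<in> T \<Longrightarrow> E x w" for w using T N_iff by blast
  have Tny: "w \<in> T \<Longrightarrow> w \<noteq> y" for w using T by blast
  have Sy: "s \<in> S \<Longrightarrow> E y s" for s using S N_iff by blast
  have Snx: "s \<in> S \<Longrightarrow> s \<noteq> x" for s using S by blast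
  have ver: "u \<in> biclaw_verts t t \<longleftrightarrow> u = BX \<or> u = BY \<or> (\<exists>i. u = BXi i \<and> i \<in> {1..t}) \<or> (\<exists>j. u = BYi j \<and> j \<in> {1..t})" for u
    unfolding biclaw_verts_def by auto
  have xT: "x \<notin> T" using TY x XY by blast
  have yS: "y \<notin> S" using SX y XY by blast
  have xS: "x \<notin> S" using Snx by blast
  have yT: "y \<notin> T" using Tny by blast
  have ST: "s \<in> S \<Longrightarrow> s \<notin> T" for s using SX TY XY by blast
  have xny: "x \<noteq> y" using x y XY by blast
  have fBX: "f BX = x" and fBY: "f BY = y" and fBXi: "f (BXi i) = hS i" and fBYi: "f (BYi i) = hT i" for i
    unfolding f_def by simp_all
  have e1: "\<not> E x (hS i)" "\<not> E (hS i) x" if "i \<in> {1..t}" for i using noXX x SX hSi[OF that] by blast+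
  have e2: "\<not> E y (hT i)" "\<not> E (hT i) y" if "i \<in> {1..t}" for i using noYY y TY hTi[OF that] by blast+
  have e3: "E x (hT i)" "E (hT i) x" if "i \<in> {1..t}" for i using Tx sym hTi[OF that] by blast+
  have e4: "E y (hS i)" "E (hS i) y" if "i \<in> {1..t}" for i using Sy sym hSi[OF that] by blast+
  have e5: "\<not> E (hS i) (hT j)" "\<not> E (hT j) (hS i)" if "i \<in> {1..t}" "j \<in> {1..t}" for i j
    using miss sym hSi[OF that(1)] hTi[OF that(2)] by blast+
  have e6: "\<not> E (hS i) (hS j)" if "i \<in> {1..t}" "j \<in> {1..t}" for i j
    using noXX SX hSi[OF that(1)] hSi[OF that(2)] by blast
  have e7: "\<not> E (hT i) (hT j)" if "i \<in> {1..t}" "j \<in> {1..t}" for i j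
    using noYY TY hTi[OF that(1)] hTi[OF that(2)] by blast
  have e8: "E x y" "E y x" using xy sym by blast+
  have e9: "\<not> E x x" "\<not> E y y" using irr by blast+
  have n1: "hS i \<noteq> x" "hS i \<noteq> y" "hT i \<noteq> x" "hT i \<noteq> y" if "i \<in> {1..t}" for i
    using xS yS xT yT hSi[OF that] hTi[OF that] by auto
  have n2: "hS i \<noteq> hT j" if "i \<in> {1..t}" "j \<in> {1..t}" for i j
    using ST hSi[OF that(1)] hTi[OF that(2)] by metis
  have "has_induced_biclaw V E t t"
    unfolding has_induced_biclaw_def
  proof (rule exI[of _ f], intro conjI)
    show "inj_on f (biclaw_verts t t)"
    proof (rule inj_onI)
      fix u v assume u: "u \<in> biclaw_verts t t" and v: "v \<in> biclaw_verts t t" and fe: "f u = f v"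
      from u v fe show "u = v" unfolding ver
        apply (elim disjE exE conjE)
        apply (simp_all add: fBX fBY fBXi fBYi)
        using xny n1 n2 hSinj hTinj by (metis atLeastAtMost_iff One_nat_def)+
    qed
    show "f ` biclaw_verts t t \<subseteq> V"
    proof
      fix z assume "z \<in> f ` biclaw_verts t t"
      then obtain u where u: "u \<in> biclaw_verts t t" "z = f u" by blast
      have "f u \<in> X \<union> Y" using u(1) unfolding ver
        apply (elim disjE exE conjE)
        using x y hSi hTi SX TY by (auto simp: fBX fBY fBXi fBYi)
      then show "z \<in> V" using u XY by simp
    qed
    show "\<forall>u\<in>biclaw_verts t t. \<forall>v\<in>biclaw_verts t t. E (f u) (f v) = biclaw_adj t t u v"
    proof (intro ballI)
      fix u v assume u: "u \<in> biclaw_verts t t" and v: "v \<in> biclaw_verts t t"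
      from u v show "E (f u) (f v) = biclaw_adj t t u v" unfolding ver
        apply (elim disjE exE conjE)
        apply (simp_all add: fBX fBY fBXi fBYi biclaw_adj_def biclaw_adj0_def)
        using e1 e2 e3 e4 e5 e6 e7 e8 e9 by (metis atLeastAtMost_iff One_nat_def)+
    qed
  qed
  then show False using nob by simp
qed

end

context bg begin

lemma card_sub_le: "finite A \<Longrightarrow> card A \<le> card (A - B) + card (A \<inter> B)"
  using card_Int_Diff[of A B] by simp

lemma card_minus1: "finite S \<Longrightarrow> card S \<le> card (S - {z}) + 1"
proof -
  assume f: "finite S"
  have "S \<subseteq> insert z (S - {z})" by blast
  then have "card S \<le> card (insert z (S - {z}))" using f by (intro card_mono) auto
  also have "\<dots> = Suc (card (S - {z}))" using f by (intro card_insert_disjoint) auto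
  finally show ?thesis by simp
qed

lemma card_Un3: "card (A \<union> B \<union> C) \<le> card A + card B + card C"
  by (meson add_le_mono card_Un_le le_refl order_trans)

lemma core:
  fixes \<eta> :: real
  assumes x: "x \<in> X" and xy: "E x y" and W: "W \<subseteq> N x - {y}" and Wbig: "2 * real t \<le> \<eta> * card W"
    and eta: "0 < \<eta>" "\<eta> \<le> 1"
    and Bs: "B \<subseteq> N y - {x}" and bad: "\<forall>x'\<in>B. \<eta> * card W \<le> card (W - N x')"
  shows "real (card B) < t * (2/\<eta>)^t"
proof (rule ccontr)
  assume "\<not> ?thesis"
  then have big: "t * (2/\<eta>)^t \<le> real (card B)" by simp
  have fW: "finite W" using W finN finite_subset by blast
  have fB: "finite B" using Bs finN finite_subset by blast
  have WV: "W \<subseteq> V" using W unfolding nbhd_def by blast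
  have eq: "{w\<in>W. \<not> E x' w} = W - N x'" for x' using WV unfolding nbhd_def by blast
  have deg: "\<forall>x'\<in>B. \<eta> * card W \<le> card {w\<in>W. \<not> E x' w}" using bad eq by simp
  obtain T B' where TB: "T \<subseteq> W" "card T = t" "B' \<subseteq> B" "(\<eta>/2)^t * card B \<le> card B'"
      "\<forall>x\<in>B'. \<forall>w\<in>T. \<not> E x w"
    using kst[OF fW fB eta deg Wbig] by blast
  have "(\<eta>/2)^t * (t * (2/\<eta>)^t) \<le> (\<eta>/2)^t * card B"
    using big eta by (intro mult_left_mono) auto
  moreover have "(\<eta>/2)^t * (t * (2/\<eta>)^t) = t"
  proof -
    have "(\<eta>/2) * (2/\<eta>) = 1" using eta by simp
    then have "(\<eta>/2)^t * (2/\<eta>)^t = 1" by (metis power_mult_distrib power_one)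
    then show ?thesis by (simp add: algebra_simps)
  qed
  ultimately have "real t \<le> card B'" using TB(4) by linarith
  then have "t \<le> card B'" by simp
  then obtain S where S: "S \<subseteq> B'" "card S = t" by (rule obtain_subset_with_card_n)
  have T1: "T \<subseteq> N x - {y}" using TB(1) W by (rule order_trans)
  have S1: "S \<subseteq> N y - {x}" using S(1) TB(3) Bs by (meson order_trans)
  have miss: "\<forall>s\<in>S. \<forall>w\<in>T. \<not> E s w" using S(1) TB(5) by blast
  show False by (rule biclaw_contra[OF x xy T1 TB(2) S1 S(2) miss])
qed

end

locale bg2 = bg +
  fixes \<eta> :: real and D :: real
  assumes eta: "0 < \<eta>" "\<eta> \<le> 1"
    and mindeg: "\<forall>v\<in>V. D \<le> card (N v)"
    and DK: "2 * (t * (2/\<eta>)^t) + 3 \<le> D"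
    and DW: "2 * real t \<le> \<eta> * (D/2 - 1)"
    and Dpos: "0 < D"
begin

lemma XV: "X \<subseteq> V" using XY by blast

lemma comb:
  assumes c1: "c1 \<in> X" and c2: "c2 \<in> X" and e1: "E c1 ys" and e2: "E c2 ys"
    and W1: "W1 \<subseteq> N c1 - {ys}" and W2: "W2 \<subseteq> N c2 - {ys}"
    and b1: "2 * real t \<le> \<eta> * card W1" and b2: "2 * real t \<le> \<eta> * card W2"
  shows "\<exists>c\<in>X. card (W1 - N c) < \<eta> * card W1 \<and> card (W2 - N c) < \<eta> * card W2"
proof -
  define bad1 where "bad1 = {x'\<in>N ys - {c1}. \<eta> * card W1 \<le> card (W1 - N x')}"
  define bad2 where "bad2 = {x'\<in>N ys - {c2}. \<eta> * card W2 \<le> card (W2 - N x')}"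
  have k1: "real (card bad1) < t * (2/\<eta>)^t"
    by (rule core[OF c1 e1 W1 b1 eta]) (auto simp: bad1_def)
  have k2: "real (card bad2) < t * (2/\<eta>)^t"
    by (rule core[OF c2 e2 W2 b2 eta]) (auto simp: bad2_def)
  have ysV: "ys \<in> V" using e1 N_iff unfolding nbhd_def by auto
  have fys: "finite (N ys)" by (rule finN)
  have fZ: "finite ({c1, c2} \<union> bad1 \<union> bad2)"
    using fys unfolding bad1_def bad2_def by auto
  have "card (N ys) \<le> card (N ys - ({c1, c2} \<union> bad1 \<union> bad2)) + card (N ys \<inter> ({c1, c2} \<union> bad1 \<union> bad2))"
    by (rule card_sub_le[OF fys])
  moreover have "card (N ys \<inter> ({c1, c2} \<union> bad1 \<union> bad2)) \<le> card ({c1, c2} \<union> bad1 \<union> bad2)"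
    using fZ by (intro card_mono) auto
  ultimately have "card (N ys) \<le> card (N ys - ({c1, c2} \<union> bad1 \<union> bad2)) + card ({c1, c2} \<union> bad1 \<union> bad2)"
    by linarith
  moreover have "card ({c1, c2} \<union> bad1 \<union> bad2) \<le> 2 + card bad1 + card bad2"
  proof -
    have "card {c1, c2} \<le> 2" by (simp add: card_insert_if)
    then show ?thesis using card_Un3[of "{c1, c2}" bad1 bad2] by linarith
  qed
  moreover have "D \<le> card (N ys)" using mindeg ysV by blast
  ultimately have "card (N ys - ({c1, c2} \<union> bad1 \<union> bad2)) > 0" using k1 k2 DK by linarith
  then have "N ys - ({c1, c2} \<union> bad1 \<union> bad2) \<noteq> {}" by (metis card.empty less_irrefl)
  then obtain c where c: "c \<in> N ys" "c \<noteq> c1" "c \<noteq> c2" "c \<notin> bad1" "c \<notin> bad2"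
    by blast
  have cX: "c \<in> X" using c(1) N_iff edge e1 c1 XY by blast
  show ?thesis using c cX unfolding bad1_def bad2_def by (auto simp: not_le)
qed

definition cov :: "real \<Rightarrow> 'a \<Rightarrow> 'a \<Rightarrow> bool" where
  "cov \<delta> a c \<longleftrightarrow> real (card (N a - N c)) \<le> \<delta> * card (N a)"

definition R :: "real \<Rightarrow> 'a \<Rightarrow> 'a \<Rightarrow> bool" where
  "R \<delta> a b \<longleftrightarrow> (\<exists>c\<in>X. cov \<delta> a c \<and> cov \<delta> b c)"

definition D2 :: "'a \<Rightarrow> 'a \<Rightarrow> bool" where
  "D2 a b \<longleftrightarrow> (\<exists>ys. E a ys \<and> E b ys)"

lemma cov_mono: "cov \<delta> a c \<Longrightarrow> \<delta> \<le> \<delta>' \<Longrightarrow> cov \<delta>' a c"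
  unfolding cov_def by (meson mult_right_mono of_nat_0_le_iff order_trans)

lemma R_mono: "R \<delta> a b \<Longrightarrow> \<delta> \<le> \<delta>' \<Longrightarrow> R \<delta>' a b"
  unfolding R_def using cov_mono by blast

lemma W_setup:
  assumes a: "a \<in> V" and cv: "cov \<delta> a c1" and d: "\<delta> \<le> 1/2"
  shows "real (card (N a)) / 2 - 1 \<le> card ((N a \<inter> N c1) - {ys})"
proof -
  have f: "finite (N a)" by (rule finN)
  have "card (N a) \<le> card (N a - N c1) + card (N a \<inter> N c1)" using card_sub_le[OF f] .
  moreover have "card (N a \<inter> N c1) \<le> card ((N a \<inter> N c1) - {ys}) + 1"
    using card_minus1[of "N a \<inter> N c1" ys] f by simp
  moreover have "real (card (N a - N c1)) \<le> card (N a) / 2"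
  proof -
    have "\<delta> * card (N a) \<le> 1/2 * card (N a)" using d by (intro mult_right_mono) auto
    then show ?thesis using cv unfolding cov_def by linarith
  qed
  ultimately show ?thesis by linarith
qed

lemma comb2:
  assumes a: "a \<in> V" and b: "b \<in> V" and d: "\<delta> \<le> 1/2"
    and ca: "cov \<delta> a c1" and cb: "cov \<delta> b c2"
    and c1: "c1 \<in> X" and c2: "c2 \<in> X" and e1: "E c1 ys" and e2: "E c2 ys"
  shows "R (\<delta> + \<eta> + 1/D) a b"
proof -
  define W1 where "W1 = (N a \<inter> N c1) - {ys}"
  define W2 where "W2 = (N b \<inter> N c2) - {ys}"
  have da: "D \<le> card (N a)" and db: "D \<le> card (N b)" using mindeg a b by auto
  have s1: "real (card (N a)) / 2 - 1 \<le> card W1" unfolding W1_def by (rule W_setup[OF a ca d])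
  have s2: "real (card (N b)) / 2 - 1 \<le> card W2" unfolding W2_def by (rule W_setup[OF b cb d])
  have b1: "2 * real t \<le> \<eta> * card W1"
  proof -
    have "\<eta> * (D/2 - 1) \<le> \<eta> * card W1" using da s1 eta by (intro mult_left_mono) auto
    then show ?thesis using DW by linarith
  qed
  have b2: "2 * real t \<le> \<eta> * card W2"
  proof -
    have "\<eta> * (D/2 - 1) \<le> \<eta> * card W2" using db s2 eta by (intro mult_left_mono) auto
    then show ?thesis using DW by linarith
  qed
  obtain c where c: "c \<in> X" "card (W1 - N c) < \<eta> * card W1" "card (W2 - N c) < \<eta> * card W2"
    using comb[OF c1 c2 e1 e2 _ _ b1 b2] unfolding W1_def W2_def by blast
  have gen: "cov (\<delta> + \<eta> + 1/D) u c"
    if u: "u \<in> V" and cu: "cov \<delta> u c1'" and W: "W = (N u \<inter> N c1') - {ys}"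
       and cw: "card (W - N c) < \<eta> * card W" for u W c1'
  proof -
    have fu: "finite (N u)" by (rule finN)
    have du: "D \<le> card (N u)" using mindeg u by auto
    have "N u - N c \<subseteq> (N u - N c1') \<union> {ys} \<union> (W - N c)" using W by blast
    then have "card (N u - N c) \<le> card ((N u - N c1') \<union> {ys} \<union> (W - N c))"
      using fu W by (intro card_mono) auto
    also have "\<dots> \<le> card (N u - N c1') + 1 + card (W - N c)"
      using card_Un3[of "N u - N c1'" "{ys}" "W - N c"] by simp
    finally have A: "real (card (N u - N c)) \<le> card (N u - N c1') + 1 + card (W - N c)" by linarith
    have "card W \<le> card (N u)" using W fu by (intro card_mono) auto
    then have B: "\<eta> * card W \<le> \<eta> * card (N u)" using eta by simp
    have C: "1 \<le> 1/D * card (N u)" using du Dpos by (simp add: field_simps)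
    show ?thesis using A B C cw cu unfolding cov_def by (simp add: algebra_simps)
  qed
  show ?thesis unfolding R_def
    using gen[OF a ca W1_def c(2)] gen[OF b cb W2_def c(3)] c(1) by blast
qed

end

context bg2 begin

lemma dpos: "v \<in> V \<Longrightarrow> 0 < card (N v)"
  using mindeg Dpos by (metis of_nat_0_less_iff order_less_le_trans)

lemma F1:
  assumes a: "a \<in> X" and b: "b \<in> X" and ea: "E a ys" and eb: "E b ys"
  shows "R (\<eta> + 1/D) a b"
proof -
  have c0: "cov 0 u u" for u unfolding cov_def by simp
  have "R (0 + \<eta> + 1/D) a b"
    by (rule comb2[OF _ _ _ c0 c0 a b ea eb]) (use a b XV in auto)
  then show ?thesis by simp
qed

lemma F2:
  assumes d: "\<delta> < 1/2" and a: "a \<in> V" and b: "b \<in> V" and m: "m \<in> V"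
    and am: "R \<delta> a m" and mb: "R \<delta> m b"
  shows "R (\<delta> + \<eta> + 1/D) a b"
proof -
  obtain c1 where c1: "c1 \<in> X" "cov \<delta> a c1" "cov \<delta> m c1" using am unfolding R_def by blast
  obtain c2 where c2: "c2 \<in> X" "cov \<delta> b c2" "cov \<delta> m c2" using mb unfolding R_def by blast
  have "N m \<inter> N c1 \<inter> N c2 \<noteq> {}"
  proof
    assume emp: "N m \<inter> N c1 \<inter> N c2 = {}"
    have "N m \<subseteq> (N m - N c1) \<union> (N m - N c2) \<union> (N m \<inter> N c1 \<inter> N c2)" by blast
    then have "card (N m) \<le> card ((N m - N c1) \<union> (N m - N c2) \<union> (N m \<inter> N c1 \<inter> N c2))"
      using finN by (intro card_mono) auto
    also have "\<dots> \<le> card (N m - N c1) + card (N m - N c2) + card (N m \<inter> N c1 \<inter> N c2)"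
      by (rule card_Un3)
    finally have "real (card (N m)) \<le> card (N m - N c1) + card (N m - N c2)" using emp by simp
    also have "\<dots> \<le> \<delta> * card (N m) + \<delta> * card (N m)" using c1(3) c2(3) unfolding cov_def by simp
    also have "\<dots> < card (N m)" using d dpos[OF m] by (simp add: field_simps)
    finally show False by simp
  qed
  then obtain ys where "ys \<in> N c1" "ys \<in> N c2" by blast
  then have e1: "E c1 ys" and e2: "E c2 ys" using N_iff by auto
  show ?thesis using comb2[OF a b _ c1(2) c2(2) c1(1) c2(1) e1 e2] d by simp
qed

lemma F3:
  assumes d: "\<delta> < 1" and a: "a \<in> V" and cv: "cov \<delta> a c"
  shows "D2 a c"
proof -
  have "N a \<inter> N c \<noteq> {}"
  proof
    assume emp: "N a \<inter> N c = {}"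
    have "card (N a) \<le> card (N a - N c) + card (N a \<inter> N c)" by (rule card_sub_le[OF finN])
    then have "real (card (N a)) \<le> \<delta> * card (N a)" using emp cv unfolding cov_def by simp
    also have "\<dots> < card (N a)" using d dpos[OF a] by simp
    finally show False by simp
  qed
  then obtain ys where "ys \<in> N a" "ys \<in> N c" by blast
  then show ?thesis unfolding D2_def using N_iff by auto
qed

definition Q :: "'a \<Rightarrow> 'a \<Rightarrow> bool" where
  "Q a b \<longleftrightarrow> (\<exists>c\<in>X. D2 a c \<and> D2 c b)"

lemma D2_sym: "D2 a b \<Longrightarrow> D2 b a" unfolding D2_def by blast

lemma L3:
  assumes small: "\<eta> + 1/D < 1/4"
    and X4: "a \<in> X" "m1 \<in> X" "m2 \<in> X" "b \<in> X"
    and d1: "D2 a m1" and d2: "D2 m1 m2" and d3: "D2 m2 b"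
  shows "Q a b"
proof -
  let ?d = "\<eta> + 1/D"
  have V4: "a \<in> V" "m1 \<in> V" "m2 \<in> V" "b \<in> V" using X4 XV by auto
  have F1': "R ?d u w" if H: "u \<in> X" "w \<in> X" "D2 u w" for u w
  proof -
    obtain ys where "E u ys" "E w ys" using H(3) unfolding D2_def by blast
    then show ?thesis using F1[OF H(1,2)] by blast
  qed
  have r1: "R ?d a m1" using F1'[OF X4(1,2) d1] .
  have r2: "R ?d m1 m2" using F1'[OF X4(2,3) d2] .
  have r3: "R ?d m2 b" using F1'[OF X4(3,4) d3] .
  have r12: "R (?d + \<eta> + 1/D) a m2" using F2[OF _ V4(1) V4(3) V4(2) r1 r2] small by simp
  have r3': "R (?d + \<eta> + 1/D) m2 b" proof (rule R_mono[OF r3])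
    have "0 < 1/D" using Dpos by simp
    then show "\<eta> + 1/D \<le> ?d + \<eta> + 1/D" using eta by linarith
  qed
  have "R (?d + \<eta> + 1/D + \<eta> + 1/D) a b"
    using F2[OF _ V4(1) V4(4) V4(3) r12 r3'] small by simp
  then obtain c where c: "c \<in> X" "cov (?d + \<eta> + 1/D + \<eta> + 1/D) a c" "cov (?d + \<eta> + 1/D + \<eta> + 1/D) b c"
    unfolding R_def by blast
  have "D2 a c" using F3[OF _ V4(1) c(2)] small by simp
  moreover have "D2 b c" using F3[OF _ V4(4) c(3)] small by simp
  ultimately show ?thesis unfolding Q_def using c(1) D2_sym by blast
qed

lemma reach:
  assumes small: "\<eta> + 1/D < 1/4" and a: "a \<in> X"
  shows "E\<^sup>*\<^sup>* a v \<Longrightarrow> (v \<in> X \<longrightarrow> Q a v) \<and> (v \<in> Y \<longrightarrow> (\<exists>x\<in>X. Q a x \<and> E x v))"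
proof (induction rule: rtranclp_induct)
  case base
  have "N a \<noteq> {}" using dpos[of a] a XV by auto
  then obtain ys where "ys \<in> N a" by blast
  then have "E a ys" using N_iff by blast
  then have "D2 a a" unfolding D2_def by blast
  then have "Q a a" unfolding Q_def using a by blast
  moreover have "a \<notin> Y" using a XY(1) by blast
  ultimately show ?case by blast
next
  case (step v w)
  from edge[OF step.hyps(2)] show ?case
  proof
    assume vw: "v \<in> X \<and> w \<in> Y"
    then have "Q a v" using step.IH by blast
    moreover have "w \<notin> X" using vw XY(1) by blast
    ultimately show ?thesis using vw step.hyps(2) by blast
  next
    assume vw: "v \<in> Y \<and> w \<in> X"
    then obtain x where x: "x \<in> X" "Q a x" "E x v" using step.IH by blast
    obtain c where c: "c \<in> X" "D2 a c" "D2 c x" using x(2) unfolding Q_def by blast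
    have "E w v" using step.hyps(2) by (rule sym)
    then have "D2 x w" unfolding D2_def using x(3) by blast
    then have "Q a w" using L3[OF small a c(1) x(1) _ c(2) c(3)] vw by blast
    moreover have "w \<notin> Y" using vw XY(1) by blast
    ultimately show ?thesis by blast
  qed
qed

lemma final:
  assumes small: "\<eta> + 1/D < 1/4" and conn: "connected_graph V E"
    and a: "a \<in> X" and b: "b \<in> X"
  shows "R (2 * (\<eta> + 1/D)) a b"
proof -
  have "E\<^sup>*\<^sup>* a b" using conn a b XV unfolding connected_graph_def by blast
  then have "Q a b" using reach[OF small a] b by blast
  then obtain c where c: "c \<in> X" "D2 a c" "D2 c b" unfolding Q_def by blast
  obtain y1 where y1: "E a y1" "E c y1" using c(2) unfolding D2_def by blast
  obtain y2 where y2: "E c y2" "E b y2" using c(3) unfolding D2_def by blast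
  have r1: "R (\<eta> + 1/D) a c" using F1[OF a c(1) y1] .
  have r2: "R (\<eta> + 1/D) c b" using F1[OF c(1) b y2] .
  have h: "\<eta> + 1/D < 1/2" using small by linarith
  have "R (\<eta> + 1/D + \<eta> + 1/D) a b" using F2[OF h _ _ _ r1 r2] a b c(1) XV by blast
  then show ?thesis by (simp add: algebra_simps)
qed

end

definition Cf :: "nat \<Rightarrow> real \<Rightarrow> real" where
  "Cf t \<epsilon> = 2 * (t * (16/\<epsilon>)^t) + 32 * t / \<epsilon> + 8 / \<epsilon> + 3"

lemma side:
  assumes sg: "simple_graph V E" and conn: "connected_graph V E"
    and bb: "balanced_bipartite V E X Y n" and nob: "\<not> has_induced_biclaw V E t t"
    and e0: "0 < \<epsilon>" and e1: "\<epsilon> < 1"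
    and md: "\<forall>v\<in>V. real (card (nbhd V E v)) \<ge> 3 * Cf t \<epsilon>"
    and a: "a \<in> X" and b: "b \<in> X"
  shows "\<exists>c\<in>X. real (card (nbhd V E a - nbhd V E c)) \<le> \<epsilon> * real (card (nbhd V E a)) \<and>
           real (card (nbhd V E b - nbhd V E c)) \<le> \<epsilon> * real (card (nbhd V E b))"
proof -
  define K where "K = real t * (16/\<epsilon>)^t"
  define A where "A = 32 * real t / \<epsilon>"
  define B where "B = 8 / \<epsilon>"
  have K0: "0 \<le> K" unfolding K_def using e0 by simp
  have t0: "0 \<le> A" unfolding A_def using e0 by simp
  have i0: "0 < B" unfolding B_def using e0 by simp
  have Cdef: "Cf t \<epsilon> = 2 * K + A + B + 3" unfolding Cf_def K_def A_def B_def by simp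
  define D where "D = 3 * Cf t \<epsilon>"
  have Dv: "D = 6 * K + 3 * A + 3 * B + 9" unfolding D_def Cdef by simp
  have Dpos: "0 < D" unfolding Dv using K0 t0 i0 by linarith
  have eta: "0 < \<epsilon>/8" "\<epsilon>/8 \<le> 1" using e0 e1 by auto
  have k: "2 / (\<epsilon>/8) = 16/\<epsilon>" by simp
  have DK: "2 * (real t * (2/(\<epsilon>/8))^t) + 3 \<le> D"
    unfolding k K_def[symmetric] Dv using K0 t0 i0 by linarith
  have DW: "2 * real t \<le> \<epsilon>/8 * (D/2 - 1)"
  proof -
    have a2: "16 * real t / \<epsilon> = A / 2" unfolding A_def by simp
    have h: "A + 2 \<le> 6 * K + 3 * A + 3 * B + 9" using K0 t0 i0 by linarith
    have "16 * real t / \<epsilon> \<le> D/2 - 1" unfolding a2 Dv using h by (simp add: field_simps)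
    then have "\<epsilon>/8 * (16 * real t / \<epsilon>) \<le> \<epsilon>/8 * (D/2 - 1)" using e0 by (intro mult_left_mono) auto
    moreover have "\<epsilon>/8 * (16 * real t / \<epsilon>) = 2 * real t" using e0 by simp
    ultimately show ?thesis by simp
  qed
  have b3: "24 / \<epsilon> = 3 * B" unfolding B_def by simp
  have D24: "24 / \<epsilon> \<le> D" unfolding b3 Dv using K0 t0 i0 by linarith
  have invD: "1/D \<le> \<epsilon>/24"
  proof -
    have "\<epsilon> * (24/\<epsilon>) \<le> \<epsilon> * D" using D24 e0 by (intro mult_left_mono) auto
    then have "24 \<le> \<epsilon> * D" using e0 by simp
    then show ?thesis using Dpos by (simp add: field_simps)
  qed
  have small: "\<epsilon>/8 + 1/D < 1/4" using invD e1 by linarith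
  have finE: "2 * (\<epsilon>/8 + 1/D) \<le> \<epsilon>"
  proof -
    have "2 * (\<epsilon>/8 + 1/D) = \<epsilon>/4 + 2 * (1/D)" by (simp add: algebra_simps)
    then show ?thesis using invD e0 by linarith
  qed
  interpret bg2 V E X Y n t "\<epsilon>/8" D
    by unfold_locales (use sg bb nob eta md DK DW Dpos in \<open>auto simp: D_def\<close>)
  obtain c where c: "c \<in> X" "cov (2 * (\<epsilon>/8 + 1/D)) a c" "cov (2 * (\<epsilon>/8 + 1/D)) b c"
    using final[OF small conn a b] unfolding R_def by blast
  have "cov \<epsilon> a c" "cov \<epsilon> b c" using cov_mono[OF c(2) finE] cov_mono[OF c(3) finE] by auto
  then show ?thesis using c(1) unfolding cov_def by blast
qed

theorem mainTheorem12:
  shows "\<exists>C :: nat \<Rightarrow> real \<Rightarrow> real. \<forall>t \<epsilon> (V :: nat set) E X Y n.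
     t > 0 \<and> 0 < \<epsilon> \<and> \<epsilon> < 1 \<and>
     simple_graph V E \<and> connected_graph V E \<and> balanced_bipartite V E X Y n \<and>
     (\<forall>v\<in>V. real (card (nbhd V E v)) \<ge> 3 * C t \<epsilon>) \<and>
     \<not> has_induced_biclaw V E t t
     \<longrightarrow> (\<forall>P\<in>{X, Y}. \<forall>a\<in>P. \<forall>b\<in>P. \<exists>c\<in>P.
           real (card (nbhd V E a - nbhd V E c)) \<le> \<epsilon> * real (card (nbhd V E a)) \<and>
           real (card (nbhd V E b - nbhd V E c)) \<le> \<epsilon> * real (card (nbhd V E b)))"
proof (rule exI[of _ Cf], intro allI impI)
  fix t \<epsilon> and V :: "nat set" and E X Y n
  assume H: "t > 0 \<and> 0 < \<epsilon> \<and> \<epsilon> < 1 \<and>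
     simple_graph V E \<and> connected_graph V E \<and> balanced_bipartite V E X Y n \<and>
     (\<forall>v\<in>V. real (card (nbhd V E v)) \<ge> 3 * Cf t \<epsilon>) \<and>
     \<not> has_induced_biclaw V E t t"
  have bb': "balanced_bipartite V E Y X n"
    using H unfolding balanced_bipartite_def by blast
  show "\<forall>P\<in>{X, Y}. \<forall>a\<in>P. \<forall>b\<in>P. \<exists>c\<in>P.
           real (card (nbhd V E a - nbhd V E c)) \<le> \<epsilon> * real (card (nbhd V E a)) \<and>
           real (card (nbhd V E b - nbhd V E c)) \<le> \<epsilon> * real (card (nbhd V E b))"
  proof (intro ballI)
    fix P a b assume P: "P \<in> {X, Y}" and a: "a \<in> P" and b: "b \<in> P"
    show "\<exists>c\<in>P.
           real (card (nbhd V E a - nbhd V E c)) \<le> \<epsilon> * real (card (nbhd V E a)) \<and>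
           real (card (nbhd V E b - nbhd V E c)) \<le> \<epsilon> * real (card (nbhd V E b))"
    proof (cases "P = X")
      case True
      then show ?thesis using side[of V E X Y n t \<epsilon> a b] H a b by blast
    next
      case False
      then have "P = Y" using P by blast
      then show ?thesis using side[of V E Y X n t \<epsilon> a b] H bb' a b by blast
    qed
  qed
qed

end
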